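(* The category $\mathcal J$ is isomorphic to Quillen's localization construction $\Sigma^{-1}\Sigma$ on the category $\Sigma$ of finite sets and bijections.
   Context: $\mathcal J$ is the category whose objects are pairs $(\mathbf n_1,\mathbf n_2)$ of finite sets $\mathbf n_i=\{1,\dots,n_i\}$, $n_i\ge0$. A morphism $(\mathbf m_1,\mathbf m_2)\to(\mathbf n_1,\mathbf n_2)$ is a triple $(\beta_1,\beta_2,\sigma)$ with $\beta_i\colon\mathbf m_i\to\mathbf n_i$ injective maps and $\sigma\colon\mathbf n_1\setminus\beta_1(\mathbf m_1)\to\mathbf n_2\setminus\beta_2(\mathbf m_2)$ a bijection. The composite of $(\alpha_1,\alpha_2,\rho)\colon(\mathbf l_1,\mathbf l_2)\to(\mathbf m_1,\mathbf m_2)$ and $(\beta_1,\beta_2,\sigma)$ is $(\beta_1\alpha_1,\beta_2\alpha_2,\tau)$ where $\tau(s)=\sigma(s)$ for $s\in\mathbf n_1\setminus\beta_1(\mathbf m_1)$ and $\tau(\beta_1(t))=\beta_2(\rho(t))$ for $t\in\mathbf m_1\setminus\alpha_1(\mathbf l_1)$. $\Sigma$ is the category with objects $\mathbf n$, $n\ge 0$, and bijections as morphisms, symmetric monoidal under concatenation $\sqcup$. $\Sigma^{-1}\Sigma$ (using the monoidal right action of $\Sigma$ on itself) has objects pairs $(\mathbf n_1,\mathbf n_2)$ of objects of $\Sigma$; a morphism $(\mathbf m_1,\mathbf m_2)\to(\mathbf n_1,\mathbf n_2)$ is an isomorphism class of pairs $(\mathbf l,(\alpha_1,\alpha_2))$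 with $\mathbf l$ an object of $\Sigma$ and $\alpha_i\colon\mathbf m_i\sqcup\mathbf l\to\mathbf n_i$ bijections, where $(\mathbf l,(\alpha_1,\alpha_2))\sim(\mathbf l,(\alpha_1',\alpha_2'))$ if there is $\sigma\in\Sigma(\mathbf l,\mathbf l)$ with $\alpha_i'\circ(1_{\mathbf m_i}\sqcup\sigma)=\alpha_i$ for $i=1,2$; composition of $[\mathbf l,(\alpha_1,\alpha_2)]$ followed by $[\mathbf l',(\beta_1,\beta_2)]$ is $[\mathbf l\sqcup\mathbf l',(\beta_i\circ(\alpha_i\sqcup 1_{\mathbf l'}))_i]$. *)

theory Defs
  imports "HOL-Library.FuncSet"
begin

text \<open>Comp C x y z f g is the composite "g after f" of
f : x \<rightarrow> y and g : y \<rightarrow> z.\<close>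

record ('o, 'm) cat =
  Ob   :: "'o set"
  Hom  :: "'o \<Rightarrow> 'o \<Rightarrow> 'm set"
  Id   :: "'o \<Rightarrow> 'm"
  Comp :: "'o \<Rightarrow> 'o \<Rightarrow> 'o \<Rightarrow> 'm \<Rightarrow> 'm \<Rightarrow> 'm"

definition is_functor ::
  "('o, 'm) cat \<Rightarrow> ('p, 'n) cat \<Rightarrow> ('o \<Rightarrow> 'p) \<Rightarrow> ('o \<Rightarrow> 'o \<Rightarrow> 'm \<Rightarrow> 'n) \<Rightarrow> bool" where
  "is_functor C D Fo Fm \<longleftrightarrow>
     (\<forall>x\<in>Ob C. Fo x \<in> Ob D) \<and>
     (\<forall>x\<in>Ob C. \<forall>y\<in>Ob C. \<forall>f\<in>Hom C x y. Fm x y f \<in> Hom D (Fo x) (Fo y)) \<and>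
     (\<forall>x\<in>Ob C. Fm x x (Id C x) = Id D (Fo x)) \<and>
     (\<forall>x\<in>Ob C. \<forall>y\<in>Ob C. \<forall>z\<in>Ob C. \<forall>f\<in>Hom C x y. \<forall>g\<in>Hom C y z.
        Fm x z (Comp C x y z f g) = Comp D (Fo x) (Fo y) (Fo z) (Fm x y f) (Fm y z g))"

definition cat_isomorphic :: "('o, 'm) cat \<Rightarrow> ('p, 'n) cat \<Rightarrow> bool" where
  "cat_isomorphic C D \<longleftrightarrow>
     (\<exists>Fo Fm Go Gm. is_functor C D Fo Fm \<and> is_functor D C Go Gm \<and>
        (\<forall>x\<in>Ob C. Go (Fo x) = x) \<and> (\<forall>y\<in>Ob D. Fo (Go y) = y) \<and>
        (\<forall>x\<in>Ob C. \<forall>y\<in>Ob C. \<forall>f\<in>Hom C x y. Gm (Fo x) (Fo y) (Fm x y f) = f) \<and>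
        (\<forall>x\<in>Ob D. \<forall>y\<in>Ob D. \<forall>f\<in>Hom D x y. Fm (Go x) (Go y) (Gm x y f) = f))"

text \<open>The finite set n is {1..n}.  Maps between finite sets are represented by
extensional functions (value undefined outside the domain).\<close>

type_synonym J_mor = "(nat \<Rightarrow> nat) \<times> (nat \<Rightarrow> nat) \<times> (nat \<Rightarrow> nat)"

definition J_hom :: "nat \<times> nat \<Rightarrow> nat \<times> nat \<Rightarrow> J_mor set" where
  "J_hom mm nn = (case mm of (m1, m2) \<Rightarrow> case nn of (n1, n2) \<Rightarrow>
     {(b1, b2, s).
        b1 \<in> extensional {1..m1} \<and> b2 \<in> extensional {1..m2} \<and>
        inj_on b1 {1..m1} \<and> inj_on b2 {1..m2} \<and>
        b1 ` {1..m1} \<subseteq> {1..n1} \<and> b2 ` {1..m2} \<subseteq> {1..n2} \<and>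
        s \<in> extensional ({1..n1} - b1 ` {1..m1}) \<and>
        bij_betw s ({1..n1} - b1 ` {1..m1}) ({1..n2} - b2 ` {1..m2})})"

definition J_id :: "nat \<times> nat \<Rightarrow> J_mor" where
  "J_id nn = (case nn of (n1, n2) \<Rightarrow>
     (restrict id {1..n1}, restrict id {1..n2}, restrict id {}))"

definition J_comp :: "nat \<times> nat \<Rightarrow> nat \<times> nat \<Rightarrow> nat \<times> nat \<Rightarrow> J_mor \<Rightarrow> J_mor \<Rightarrow> J_mor" where
  "J_comp ll mm nn f g = (case ll of (l1, l2) \<Rightarrow> case mm of (m1, m2) \<Rightarrow> case nn of (n1, n2) \<Rightarrow>
     case f of (a1, a2, r) \<Rightarrow> case g of (b1, b2, s) \<Rightarrow>
       (restrict (b1 \<circ> a1) {1..l1}, restrict (b2 \<circ> a2) {1..l2},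
        (\<lambda>x. if x \<in> {1..n1} - b1 ` {1..m1} then s x
             else if x \<in> b1 ` ({1..m1} - a1 ` {1..l1})
               then b2 (r (the_inv_into {1..m1} b1 x))
             else undefined)))"

definition J_cat :: "(nat \<times> nat, J_mor) cat" where
  "J_cat = \<lparr>Ob = UNIV, Hom = J_hom, Id = J_id, Comp = J_comp\<rparr>"

definition bijs :: "nat set \<Rightarrow> nat set \<Rightarrow> (nat \<Rightarrow> nat) set" where
  "bijs A B = {f \<in> extensional A. bij_betw f A B}"

text \<open>Concatenation f \<squnion> g of maps f : m \<rightarrow> m' and g : l \<rightarrow> l' as a map
m \<squnion> l \<rightarrow> m' \<squnion> l' (with m \<squnion> l = {1..m+l}); not restricted here.\<close>

definition tsum :: "nat \<Rightarrow> nat \<Rightarrow> (nat \<Rightarrow> nat) \<Rightarrow> (nat \<Rightarrow> nat) \<Rightarrow> nat \<Rightarrow> nat" where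
  "tsum m m' f g x = (if x \<le> m then f x else m' + g (x - m))"

text \<open>The equivalence class of (l,(a1,a2)), with a_i : m_i \<squnion> l \<rightarrow> n_i bijections:
all (a1',a2') with a_i' \<circ> (1 \<squnion> \<sigma>) = a_i for some \<sigma> \<in> \<Sigma>(l,l).\<close>

definition SS_cls :: "nat \<Rightarrow> nat \<Rightarrow> nat \<Rightarrow> nat \<Rightarrow> nat \<Rightarrow> (nat \<Rightarrow> nat) \<times> (nat \<Rightarrow> nat)
    \<Rightarrow> ((nat \<Rightarrow> nat) \<times> (nat \<Rightarrow> nat)) set" where
  "SS_cls m1 m2 n1 n2 l a =
     {(c1, c2). c1 \<in> bijs {1..m1 + l} {1..n1} \<and> c2 \<in> bijs {1..m2 + l} {1..n2} \<and>
        (\<exists>\<sigma>\<in>bijs {1..l} {1..l}.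
           (\<forall>x\<in>{1..m1 + l}. c1 (tsum m1 m1 id \<sigma> x) = fst a x) \<and>
           (\<forall>x\<in>{1..m2 + l}. c2 (tsum m2 m2 id \<sigma> x) = snd a x))}"

type_synonym SS_mor = "nat \<times> ((nat \<Rightarrow> nat) \<times> (nat \<Rightarrow> nat)) set"

definition SS_hom :: "nat \<times> nat \<Rightarrow> nat \<times> nat \<Rightarrow> SS_mor set" where
  "SS_hom mm nn = (case mm of (m1, m2) \<Rightarrow> case nn of (n1, n2) \<Rightarrow>
     {(l, SS_cls m1 m2 n1 n2 l (a1, a2)) | l a1 a2.
        a1 \<in> bijs {1..m1 + l} {1..n1} \<and> a2 \<in> bijs {1..m2 + l} {1..n2}})"

definition SS_id :: "nat \<times> nat \<Rightarrow> SS_mor" where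
  "SS_id nn = (case nn of (n1, n2) \<Rightarrow>
     (0, SS_cls n1 n2 n1 n2 0 (restrict id {1..n1}, restrict id {1..n2})))"

text \<open>Composition on representatives: [l,(a1,a2)] followed by [l',(b1,b2)] is
[l \<squnion> l', (b_i \<circ> (a_i \<squnion> 1_(l')))].\<close>

definition SS_comp :: "nat \<times> nat \<Rightarrow> nat \<times> nat \<Rightarrow> nat \<times> nat \<Rightarrow> SS_mor \<Rightarrow> SS_mor \<Rightarrow> SS_mor" where
  "SS_comp kk mm nn f g = (case kk of (k1, k2) \<Rightarrow> case mm of (m1, m2) \<Rightarrow> case nn of (n1, n2) \<Rightarrow>
     case f of (l, A) \<Rightarrow> case g of (l', B) \<Rightarrow>
       (let a = (SOME a. a \<in> A); b = (SOME b. b \<in> B) in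
        (l + l', SS_cls k1 k2 n1 n2 (l + l')
           (restrict (fst b \<circ> tsum (k1 + l) m1 (fst a) id) {1..k1 + l + l'},
            restrict (snd b \<circ> tsum (k2 + l) m2 (snd a) id) {1..k2 + l + l'}))))"

definition SS_cat :: "(nat \<times> nat, SS_mor) cat" where
  "SS_cat = \<lparr>Ob = UNIV, Hom = SS_hom, Id = SS_id, Comp = SS_comp\<rparr>"

end

theory Submission
  imports Defs
begin

lemma bij_concat:
  fixes f g :: "nat \<Rightarrow> nat" and p a :: nat
  assumes f: "bij_betw f {1..p} X" and g: "bij_betw g {1..a} Y" and d: "X \<inter> Y = {}"
  shows "bij_betw (\<lambda>x. if x \<le> p then f x else g (x - p)) {1..p+a} (X \<union> Y)"
proof -
  let ?h = "\<lambda>x. if x \<le> p then f x else g (x - p)"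
  have s: "{1..p+a} = {1..p} \<union> {p+1..p+a}" by auto
  have 1: "bij_betw ?h {1..p} X" using f by (rule bij_betw_cong[THEN iffD2, rotated]) auto
  have sh: "bij_betw (\<lambda>x. x - p) {p+1..p+a} {1..a}"
    unfolding bij_betw_def inj_on_def
    by (auto simp: image_def intro!: bexI[where x="_ + p"])
  have "bij_betw (g \<circ> (\<lambda>x. x - p)) {p+1..p+a} Y" using bij_betw_trans[OF sh g] .
  then have 2: "bij_betw ?h {p+1..p+a} Y" by (rule bij_betw_cong[THEN iffD2, rotated]) auto
  show ?thesis unfolding s by (rule bij_betw_combine[OF 1 2 d])
qed

lemma iso_from_bij_functor:
  fixes C :: "('o,'m) cat" and D :: "('o,'n) cat"
  assumes G: "is_functor D C (\<lambda>x. x) Gm" and ob: "Ob C = Ob D"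
    and bij: "\<And>x y. x \<in> Ob D \<Longrightarrow> y \<in> Ob D \<Longrightarrow> bij_betw (Gm x y) (Hom D x y) (Hom C x y)"
    and cl: "\<And>x y z f g. x \<in> Ob D \<Longrightarrow> y \<in> Ob D \<Longrightarrow> z \<in> Ob D \<Longrightarrow> f \<in> Hom D x y \<Longrightarrow> g \<in> Hom D y z
       \<Longrightarrow> Comp D x y z f g \<in> Hom D x z"
    and idh: "\<And>x. x \<in> Ob D \<Longrightarrow> Id D x \<in> Hom D x x"
  shows "cat_isomorphic C D"
proof -
  define Fm where "Fm x y f = inv_into (Hom D x y) (Gm x y) f" for x y f
  have inj: "inj_on (Gm x y) (Hom D x y)" and surj: "Gm x y ` Hom D x y = Hom C x y"
    if "x \<in> Ob D" "y \<in> Ob D" for x y using bij[OF that] by (auto simp: bij_betw_def)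
  have FG: "Fm x y (Gm x y f) = f" if "x \<in> Ob D" "y \<in> Ob D" "f \<in> Hom D x y" for x y f
    using inj[OF that(1,2)] that(3) by (simp add: Fm_def inv_into_f_f)
  have GF: "Gm x y (Fm x y f) = f" if "x \<in> Ob D" "y \<in> Ob D" "f \<in> Hom C x y" for x y f
    using surj[OF that(1,2)] that(3) by (simp add: Fm_def f_inv_into_f)
  have Fh: "Fm x y f \<in> Hom D x y" if "x \<in> Ob D" "y \<in> Ob D" "f \<in> Hom C x y" for x y f
    using surj[OF that(1,2)] that(3) by (simp add: Fm_def inv_into_into)
  have Gh: "\<And>x y f. x \<in> Ob D \<Longrightarrow> y \<in> Ob D \<Longrightarrow> f \<in> Hom D x y \<Longrightarrow> Gm x y f \<in> Hom C x y"
   and Gid: "\<And>x. x \<in> Ob D \<Longrightarrow> Gm x x (Id D x) = Id C x"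
   and Gc: "\<And>x y z f g. x \<in> Ob D \<Longrightarrow> y \<in> Ob D \<Longrightarrow> z \<in> Ob D \<Longrightarrow> f \<in> Hom D x y \<Longrightarrow> g \<in> Hom D y z
       \<Longrightarrow> Gm x z (Comp D x y z f g) = Comp C x y z (Gm x y f) (Gm y z g)"
    using G unfolding is_functor_def by auto
  have F: "is_functor C D (\<lambda>x. x) Fm"
    unfolding is_functor_def
  proof (intro conjI ballI)
    fix x assume x: "x \<in> Ob C"
    show "x \<in> Ob D" using x ob by simp
    show "Fm x x (Id C x) = Id D x" using x ob Gid[of x] FG[of x x "Id D x"] idh[of x] by simp
  next
    fix x y f assume "x \<in> Ob C" "y \<in> Ob C" "f \<in> Hom C x y"
    then show "Fm x y f \<in> Hom D x y" using Fh ob by simp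
  next
    fix x y z f g assume a: "x \<in> Ob C" "y \<in> Ob C" "z \<in> Ob C" "f \<in> Hom C x y" "g \<in> Hom C y z"
    then have o: "x \<in> Ob D" "y \<in> Ob D" "z \<in> Ob D" using ob by auto
    have "Comp C x y z f g = Comp C x y z (Gm x y (Fm x y f)) (Gm y z (Fm y z g))"
      using GF o a by simp
    also have "\<dots> = Gm x z (Comp D x y z (Fm x y f) (Fm y z g))"
      using Gc o Fh a by simp
    finally show "Fm x z (Comp C x y z f g) = Comp D x y z (Fm x y f) (Fm y z g)"
      using FG o cl Fh a by simp
  qed
  show ?thesis unfolding cat_isomorphic_def
    apply (rule exI[of _ "\<lambda>x. x"], rule exI[of _ Fm], rule exI[of _ "\<lambda>x. x"], rule exI[of _ Gm])
    using F G ob FG GF Fh by auto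
qed

definition Phi :: "nat \<Rightarrow> nat \<Rightarrow> nat \<Rightarrow> nat \<Rightarrow> (nat\<Rightarrow>nat)\<times>(nat\<Rightarrow>nat) \<Rightarrow> J_mor" where
 "Phi m1 m2 n1 l c = (restrict (fst c) {1..m1}, restrict (snd c) {1..m2},
    (\<lambda>y. if y \<in> {1..n1} - fst c ` {1..m1}
         then snd c (m2 + (the_inv_into {1..m1+l} (fst c) y - m1)) else undefined))"

lemma bijsD: "f \<in> bijs A B \<Longrightarrow> f \<in> extensional A \<and> inj_on f A \<and> f ` A = B"
  by (simp add: bijs_def bij_betw_def)

lemma cls_imp_Phi:
  assumes a1: "a1 \<in> bijs {1..m1+l} {1..n1}" and a2: "a2 \<in> bijs {1..m2+l} {1..n2}"
    and c: "(c1,c2) \<in> SS_cls m1 m2 n1 n2 l (a1,a2)"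
  shows "Phi m1 m2 n1 l (c1,c2) = Phi m1 m2 n1 l (a1,a2)"
proof -
  from c obtain \<sigma> where c1: "c1 \<in> bijs {1..m1+l} {1..n1}" and c2: "c2 \<in> bijs {1..m2+l} {1..n2}"
    and \<sigma>: "\<sigma> \<in> bijs {1..l} {1..l}"
    and e1: "\<forall>x\<in>{1..m1+l}. c1 (tsum m1 m1 id \<sigma> x) = a1 x"
    and e2: "\<forall>x\<in>{1..m2+l}. c2 (tsum m2 m2 id \<sigma> x) = a2 x"
    unfolding SS_cls_def by auto
  note A1 = bijsD[OF a1] and A2 = bijsD[OF a2] and C1 = bijsD[OF c1] and C2 = bijsD[OF c2]
    and S = bijsD[OF \<sigma>]
  have r1: "c1 x = a1 x" if "x \<in> {1..m1}" for x using e1[rule_format, of x] that by (auto simp: tsum_def)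
  have r2: "c2 x = a2 x" if "x \<in> {1..m2}" for x using e2[rule_format, of x] that by (auto simp: tsum_def)
  have img: "c1 ` {1..m1} = a1 ` {1..m1}" using r1 by auto
  have th: "c2 (m2 + (the_inv_into {1..m1+l} c1 y - m1)) = a2 (m2 + (the_inv_into {1..m1+l} a1 y - m1))"
    if y: "y \<in> {1..n1} - a1 ` {1..m1}" for y
  proof -
    obtain x where x: "x \<in> {1..m1+l}" "y = a1 x" using y A1 by blast
    have xm: "x > m1" using x y by auto
    define j where "j = x - m1"
    have j: "j \<in> {1..l}" "x = m1 + j" using x xm by (auto simp: j_def)
    have sj: "\<sigma> j \<in> {1..l}" using S j by blast
    have "c1 (m1 + \<sigma> j) = y" using e1[rule_format, of x] x j by (auto simp: tsum_def)
    then have i1: "the_inv_into {1..m1+l} c1 y = m1 + \<sigma> j"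
      using C1 sj by (auto intro!: the_inv_into_f_f)
    have i2: "the_inv_into {1..m1+l} a1 y = m1 + j"
      using A1 x j by (auto intro!: the_inv_into_f_f)
    have "c2 (m2 + \<sigma> j) = a2 (m2 + j)" using e2[rule_format, of "m2 + j"] j by (auto simp: tsum_def)
    then show ?thesis using i1 i2 by simp
  qed
  show ?thesis unfolding Phi_def using r1 r2 img th
    by (auto simp: fun_eq_iff restrict_def)
qed

lemma Phi_imp_cls:
  assumes a1: "a1 \<in> bijs {1..m1+l} {1..n1}" and a2: "a2 \<in> bijs {1..m2+l} {1..n2}"
    and c1: "c1 \<in> bijs {1..m1+l} {1..n1}" and c2: "c2 \<in> bijs {1..m2+l} {1..n2}"
    and eq: "Phi m1 m2 n1 l (c1,c2) = Phi m1 m2 n1 l (a1,a2)"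
  shows "(c1,c2) \<in> SS_cls m1 m2 n1 n2 l (a1,a2)"
proof -
  note A1 = bijsD[OF a1] and A2 = bijsD[OF a2] and C1 = bijsD[OF c1] and C2 = bijsD[OF c2]
  from eq have q1: "restrict c1 {1..m1} = restrict a1 {1..m1}"
    and q2: "restrict c2 {1..m2} = restrict a2 {1..m2}"
    and q3: "(\<lambda>y. if y \<in> {1..n1} - c1 ` {1..m1}
         then c2 (m2 + (the_inv_into {1..m1+l} c1 y - m1)) else undefined) =
      (\<lambda>y. if y \<in> {1..n1} - a1 ` {1..m1}
         then a2 (m2 + (the_inv_into {1..m1+l} a1 y - m1)) else undefined)"
    using eq unfolding Phi_def prod.inject fst_conv snd_conv by blast+
  have r1: "c1 x = a1 x" if "x \<in> {1..m1}" for x using fun_cong[OF q1, of x] that by simp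
  have r2: "c2 x = a2 x" if "x \<in> {1..m2}" for x using fun_cong[OF q2, of x] that by simp
  have img: "c1 ` {1..m1} = a1 ` {1..m1}" using r1 by auto
  have t: "c2 (m2 + (the_inv_into {1..m1+l} c1 y - m1)) = a2 (m2 + (the_inv_into {1..m1+l} a1 y - m1))"
    if "y \<in> {1..n1} - a1 ` {1..m1}" for y
    using fun_cong[OF q3, of y] that img by simp
  define \<sigma> where "\<sigma> = restrict (\<lambda>j. the_inv_into {1..m1+l} c1 (a1 (m1+j)) - m1) {1..l}"
  have key: "a1 (m1+j) \<in> {1..n1} - a1 ` {1..m1} \<and> the_inv_into {1..m1+l} c1 (a1 (m1+j)) = m1 + \<sigma> j
      \<and> \<sigma> j \<in> {1..l} \<and> the_inv_into {1..m1+l} a1 (a1 (m1+j)) = m1 + j" if j: "j \<in> {1..l}" for j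
  proof -
    let ?y = "a1 (m1+j)"
    have yin: "?y \<in> {1..n1}" using A1 j by auto
    have ynot: "?y \<notin> a1 ` {1..m1}"
    proof
      assume "?y \<in> a1 ` {1..m1}"
      then obtain x where "x \<in> {1..m1}" "a1 x = ?y" by auto
      moreover have "x \<in> {1..m1+l}" "m1+j \<in> {1..m1+l}" using \<open>x \<in> {1..m1}\<close> j by auto
      ultimately have "x = m1 + j" using A1 by (auto dest: inj_onD)
      then show False using \<open>x \<in> {1..m1}\<close> j by auto
    qed
    have yc: "?y \<in> c1 ` {1..m1+l}" using yin C1 by simp
    have ii: "the_inv_into {1..m1+l} c1 ?y \<in> {1..m1+l}"
      using the_inv_into_into[of c1 "{1..m1+l}" ?y "{1..m1+l}"] C1 yc by blast
    have ic: "c1 (the_inv_into {1..m1+l} c1 ?y) = ?y" using C1 yc by (auto intro: f_the_inv_into_f)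
    have "the_inv_into {1..m1+l} c1 ?y \<notin> {1..m1}"
      using ic ynot img by (metis image_eqI)
    then have gt: "the_inv_into {1..m1+l} c1 ?y > m1" using ii by auto
    have sj: "\<sigma> j = the_inv_into {1..m1+l} c1 ?y - m1" using j by (simp add: \<sigma>_def)
    have "the_inv_into {1..m1+l} a1 (a1 (m1+j)) = m1 + j"
      using A1 j by (intro the_inv_into_f_f) auto
    then show ?thesis using sj gt ii yin ynot by auto
  qed
  have sinj: "inj_on \<sigma> {1..l}"
  proof (rule inj_onI)
    fix i j assume i: "i \<in> {1..l}" and j: "j \<in> {1..l}" and e: "\<sigma> i = \<sigma> j"
    have yc: "a1 (m1+k) \<in> c1 ` {1..m1+l}" if "k \<in> {1..l}" for k using key[OF that] C1 by auto
    have "c1 (the_inv_into {1..m1+l} c1 (a1 (m1+i))) = c1 (the_inv_into {1..m1+l} c1 (a1 (m1+j)))"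
      using key[OF i] key[OF j] e by simp
    then have "a1 (m1+i) = a1 (m1+j)" using yc[OF i] yc[OF j] C1 by (simp add: f_the_inv_into_f)
    then show "i = j" using A1 i j by (auto dest: inj_onD)
  qed
  have sb: "\<sigma> \<in> bijs {1..l} {1..l}"
  proof -
    have "\<sigma> ` {1..l} \<subseteq> {1..l}" using key by auto
    then have "\<sigma> ` {1..l} = {1..l}" using sinj by (intro endo_inj_surj) auto
    then show ?thesis using sinj by (auto simp: bijs_def bij_betw_def \<sigma>_def)
  qed
  have e1: "\<forall>x\<in>{1..m1+l}. c1 (tsum m1 m1 id \<sigma> x) = a1 x"
  proof
    fix x assume x: "x \<in> {1..m1+l}"
    show "c1 (tsum m1 m1 id \<sigma> x) = a1 x"
    proof (cases "x \<le> m1")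
      case True then show ?thesis using r1 x by (simp add: tsum_def)
    next
      case False
      define j where "j = x - m1"
      have j: "j \<in> {1..l}" "x = m1 + j" using x False by (auto simp: j_def)
      have yc: "a1 (m1+j) \<in> c1 ` {1..m1+l}" using key[OF j(1)] C1 by auto
      have "c1 (m1 + \<sigma> j) = a1 (m1 + j)" using key[OF j(1)] C1 yc
        by (metis f_the_inv_into_f)
      then show ?thesis using False j by (simp add: tsum_def)
    qed
  qed
  have e2: "\<forall>x\<in>{1..m2+l}. c2 (tsum m2 m2 id \<sigma> x) = a2 x"
  proof
    fix x assume x: "x \<in> {1..m2+l}"
    show "c2 (tsum m2 m2 id \<sigma> x) = a2 x"
    proof (cases "x \<le> m2")
      case True then show ?thesis using r2 x by (simp add: tsum_def)
    next
      case False
      define j where "j = x - m2"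
      have j: "j \<in> {1..l}" "x = m2 + j" using x False by (auto simp: j_def)
      have "c2 (m2 + \<sigma> j) = a2 (m2 + j)" using key[OF j(1)] t[of "a1 (m1+j)"] by simp
      then show ?thesis using False j by (simp add: tsum_def)
    qed
  qed
  show ?thesis unfolding SS_cls_def using c1 c2 sb e1 e2 by auto
qed

definition phi3 :: "nat \<Rightarrow> nat \<Rightarrow> nat \<Rightarrow> nat \<Rightarrow> (nat\<Rightarrow>nat) \<Rightarrow> (nat\<Rightarrow>nat) \<Rightarrow> nat \<Rightarrow> nat" where
  "phi3 m1 m2 n1 l a1 a2 = (\<lambda>y. if y \<in> {1..n1} - a1 ` {1..m1}
         then a2 (m2 + (the_inv_into {1..m1+l} a1 y - m1)) else undefined)"

lemma Phi_eq: "Phi m1 m2 n1 l (a1,a2) = (restrict a1 {1..m1}, restrict a2 {1..m2}, phi3 m1 m2 n1 l a1 a2)"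
  unfolding Phi_def phi3_def fst_conv snd_conv by (rule refl)

lemma phi3_in:
  assumes a1: "a1 \<in> bijs {1..m1+l} {1..n1}" and j: "j \<in> {1..l}"
  shows "phi3 m1 m2 n1 l a1 a2 (a1 (m1+j)) = a2 (m2+j)"
proof -
  note A1 = bijsD[OF a1]
  have "a1 (m1+j) \<in> {1..n1}" using A1 j by auto
  moreover have "a1 (m1+j) \<notin> a1 ` {1..m1}"
    using inj_on_image_mem_iff[of a1 "{1..m1+l}" "m1+j" "{1..m1}"] A1 j by auto
  moreover have "the_inv_into {1..m1+l} a1 (a1 (m1+j)) = m1 + j"
    using A1 j by (intro the_inv_into_f_f) auto
  ultimately show ?thesis by (simp add: phi3_def)
qed

lemma phi3_out: assumes "y \<notin> {1..n1} - a1 ` {1..m1}" shows "phi3 m1 m2 n1 l a1 a2 y = undefined"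
  unfolding phi3_def using assms by (simp only: if_not_P if_False)

lemma bij_shift: "bij_betw (\<lambda>j. q + j) {1..a} {q+1..q+(a::nat)}"
proof -
  have "x \<in> (\<lambda>j. q + j) ` {1..a}" if "x \<in> {q+1..q+a}" for x
    using that by (intro image_eqI[of _ _ "x - q"]) auto
  then show ?thesis unfolding bij_betw_def inj_on_def by auto
qed

lemma tsum_id: "tsum p q f id = (\<lambda>x. if x \<le> p then f x else q + (x-p))"
  by (auto simp: tsum_def fun_eq_iff)

lemma tsum_bij:
  assumes "bij_betw f {1..p} {1..q}"
  shows "bij_betw (tsum p q f id) {1..p+a} {1..q+a}"
proof -
  have "bij_betw (\<lambda>x. if x \<le> p then f x else (\<lambda>j. q + j) (x - p)) {1..p+a} ({1..q} \<union> {q+1..q+a})"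
    by (rule bij_concat[OF assms bij_shift]) auto
  moreover have "{1..q} \<union> {q+1..q+a} = {1..q+a}" by auto
  ultimately show ?thesis by (simp add: tsum_id)
qed

lemma comp_valid:
  assumes a1: "a1 \<in> bijs {1..k+l} {1..m}" and b1: "b1 \<in> bijs {1..m+l'} {1..n}"
  shows "restrict (b1 \<circ> tsum (k+l) m a1 id) {1..k+l+l'} \<in> bijs {1..k+(l+l')} {1..n}"
proof -
  have "bij_betw (tsum (k+l) m a1 id) {1..k+l+l'} {1..m+l'}"
    using bijsD[OF a1] by (intro tsum_bij) (auto simp: bij_betw_def)
  then have "bij_betw (b1 \<circ> tsum (k+l) m a1 id) {1..k+l+l'} {1..n}"
    using bijsD[OF b1] by (intro bij_betw_trans) (auto simp: bij_betw_def)
  then show ?thesis by (simp add: bijs_def add.assoc bij_betw_cong[of _ _ "restrict _ _"])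
qed

lemma J_comp_eq: "J_comp (k1,k2) (m1,m2) (n1,n2) (x1,x2,x3) (y1,y2,y3) =
  (restrict (y1 \<circ> x1) {1..k1}, restrict (y2 \<circ> x2) {1..k2},
   (\<lambda>x. if x \<in> {1..n1} - y1 ` {1..m1} then y3 x
             else if x \<in> y1 ` ({1..m1} - x1 ` {1..k1})
               then y2 (x3 (the_inv_into {1..m1} y1 x))
             else undefined))"
  unfolding J_comp_def by (simp only: prod.case)

lemma comp_Phi:
  assumes a1: "a1 \<in> bijs {1..k1+l} {1..m1}" and a2: "a2 \<in> bijs {1..k2+l} {1..m2}"
    and b1: "b1 \<in> bijs {1..m1+l'} {1..n1}" and b2: "b2 \<in> bijs {1..m2+l'} {1..n2}"
    and c1d: "c1 = restrict (b1 \<circ> tsum (k1+l) m1 a1 id) {1..k1+l+l'}"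
    and c2d: "c2 = restrict (b2 \<circ> tsum (k2+l) m2 a2 id) {1..k2+l+l'}"
  shows "Phi k1 k2 n1 (l+l') (c1,c2) =
     J_comp (k1,k2) (m1,m2) (n1,n2) (Phi k1 k2 m1 l (a1,a2)) (Phi m1 m2 n1 l' (b1,b2))"
proof -
  note A1 = bijsD[OF a1] and A2 = bijsD[OF a2] and B1 = bijsD[OF b1] and B2 = bijsD[OF b2]
  have a1inj: "inj_on a1 {1..k1+l}" and b1inj: "inj_on b1 {1..m1+l'}" and b1img: "b1 ` {1..m1+l'} = {1..n1}"
    using A1 B1 by blast+
  have c1v: "c1 \<in> bijs {1..k1+(l+l')} {1..n1}" unfolding c1d by (rule comp_valid[OF a1 b1])
  note C1 = bijsD[OF c1v]
  have c1img: "c1 ` {1..k1+(l+l')} = {1..n1}" using C1 by blast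
  have c1a: "c1 x = b1 (a1 x)" if "x \<in> {1..k1+l}" for x using that by (simp add: c1d tsum_def)
  have c1b: "c1 (k1+l+j) = b1 (m1+j)" if "j \<in> {1..l'}" for j using that by (simp add: c1d tsum_def)
  have c2a: "c2 x = b2 (a2 x)" if "x \<in> {1..k2+l}" for x using that by (simp add: c2d tsum_def)
  have c2b: "c2 (k2+l+j) = b2 (m2+j)" if "j \<in> {1..l'}" for j using that by (simp add: c2d tsum_def)
  have rimg: "restrict b1 {1..m1} ` A = b1 ` A" if "A \<subseteq> {1..m1}" for A
    by (rule image_cong) (use that in auto)
  have rimga: "restrict a1 {1..k1} ` {1..k1} = a1 ` {1..k1}" by (rule image_cong) auto
  have rinj: "inj_on (restrict b1 {1..m1}) {1..m1}"
  proof -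
    have "inj_on b1 {1..m1}" using B1 by (meson inj_on_subset atLeastatMost_subset_iff le_add1 order_refl)
    then show ?thesis by (subst inj_on_cong[of _ _ b1]) auto
  qed
  have a1in: "a1 x \<in> {1..m1}" if "x \<in> {1..k1+l}" for x using A1 that by blast
  have a2in: "a2 x \<in> {1..m2}" if "x \<in> {1..k2+l}" for x using A2 that by blast
  have p1: "restrict c1 {1..k1} = restrict (restrict b1 {1..m1} \<circ> restrict a1 {1..k1}) {1..k1}"
  proof (rule ext)
    fix x show "restrict c1 {1..k1} x = restrict (restrict b1 {1..m1} \<circ> restrict a1 {1..k1}) {1..k1} x"
    proof (cases "x \<in> {1..k1}")
      case True
      then have "x \<in> {1..k1+l}" by auto
      then show ?thesis using True c1a[of x] a1in[of x] by simp
    next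
      case False then show ?thesis unfolding restrict_apply by (simp only: if_False)
    qed
  qed
  have c2a': "c2 x = b2 (a2 x)" if "x \<in> {1..k2}" for x using that c2a by auto
  have p2: "restrict c2 {1..k2} = restrict (restrict b2 {1..m2} \<circ> restrict a2 {1..k2}) {1..k2}"
  proof (rule ext)
    fix x show "restrict c2 {1..k2} x = restrict (restrict b2 {1..m2} \<circ> restrict a2 {1..k2}) {1..k2} x"
    proof (cases "x \<in> {1..k2}")
      case True
      then have "x \<in> {1..k2+l}" by auto
      then show ?thesis using True c2a[of x] a2in[of x] by simp
    next
      case False then show ?thesis unfolding restrict_apply by (simp only: if_False)
    qed
  qed
  have p3: "phi3 k1 k2 n1 (l+l') c1 c2 y =
     (if y \<in> {1..n1} - restrict b1 {1..m1} ` {1..m1} then phi3 m1 m2 n1 l' b1 b2 y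
      else if y \<in> restrict b1 {1..m1} ` ({1..m1} - restrict a1 {1..k1} ` {1..k1})
        then restrict b2 {1..m2} (phi3 k1 k2 m1 l a1 a2 (the_inv_into {1..m1} (restrict b1 {1..m1}) y))
      else undefined)" for y
  proof (cases "y \<in> {1..n1}")
    case False
    have "restrict b1 {1..m1} ` ({1..m1} - restrict a1 {1..k1} ` {1..k1}) \<subseteq> {1..n1}"
    proof
      fix z assume "z \<in> restrict b1 {1..m1} ` ({1..m1} - restrict a1 {1..k1} ` {1..k1})"
      then obtain w where w: "w \<in> {1..m1}" "z = restrict b1 {1..m1} w" by blast
      then have "z = b1 w" by simp
      moreover have "w \<in> {1..m1+l'}" using w by auto
      ultimately show "z \<in> {1..n1}" using b1img by blast
    qed
    then have n2: "y \<notin> restrict b1 {1..m1} ` ({1..m1} - restrict a1 {1..k1} ` {1..k1})" using False by blast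
    have n1: "y \<notin> {1..n1} - restrict b1 {1..m1} ` {1..m1}" using False by blast
    have l: "phi3 k1 k2 n1 (l+l') c1 c2 y = undefined" using False by (intro phi3_out) blast
    show ?thesis unfolding l using n1 n2 by (simp only: if_not_P if_False)
  next
    case True
    then obtain x where x: "x \<in> {1..k1+(l+l')}" "y = c1 x" using c1img by blast
    consider (a) "x \<le> k1" | (b) "k1 < x" "x \<le> k1 + l" | (c) "k1 + l < x" by linarith
    then show ?thesis
    proof cases
      case a
      have xk: "x \<in> {1..k1+l}" using x a by auto
      have y: "y = b1 (a1 x)" using x xk c1a by auto
      have ax: "a1 x \<in> {1..m1}" using a1in xk by blast
      have l: "phi3 k1 k2 n1 (l+l') c1 c2 y = undefined"
      proof (rule phi3_out)
        show "y \<notin> {1..n1} - c1 ` {1..k1}" using x a by auto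
      qed
      have n1: "y \<in> restrict b1 {1..m1} ` {1..m1}" using y ax rimg[of "{1..m1}"] by auto
      have n2: "y \<notin> restrict b1 {1..m1} ` ({1..m1} - restrict a1 {1..k1} ` {1..k1})"
      proof
        assume "y \<in> restrict b1 {1..m1} ` ({1..m1} - restrict a1 {1..k1} ` {1..k1})"
        then obtain z where z: "z \<in> {1..m1}" "z \<notin> restrict a1 {1..k1} ` {1..k1}" "y = restrict b1 {1..m1} z"
          by blast
        then have z': "z \<notin> a1 ` {1..k1}" "y = b1 z" using rimga by auto
        have "z \<in> {1..m1+l'}" "a1 x \<in> {1..m1+l'}" using z ax by auto
        then have "z = a1 x" using y z' b1inj by (auto dest: inj_onD)
        then show False using z' x a by auto
      qed
      show ?thesis unfolding l using n1 n2 by (simp only: if_not_P if_False Diff_iff not_not simp_thms)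
    next
      case b
      define i where "i = x - k1"
      have i: "i \<in> {1..l}" "x = k1 + i" using b by (auto simp: i_def)
      have xk: "k1 + i \<in> {1..k1+l}" using i by auto
      have y: "y = b1 (a1 (k1+i))" using x i c1a[OF xk] by simp
      have z: "a1 (k1+i) \<in> {1..m1}" using a1in[OF xk] .
      have znot: "a1 (k1+i) \<notin> a1 ` {1..k1}"
        using inj_on_image_mem_iff[of a1 "{1..k1+l}" "k1+i" "{1..k1}"] a1inj xk i by auto
      have "phi3 k1 k2 n1 (l+l') c1 c2 (c1 (k1+i)) = c2 (k2+i)"
        using phi3_in[OF c1v, of i k2 c2] i by auto
      moreover have "c2 (k2+i) = b2 (a2 (k2+i))" using c2a[of "k2+i"] i by auto
      ultimately have l: "phi3 k1 k2 n1 (l+l') c1 c2 y = b2 (a2 (k2+i))" using x i by simp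
      have n1: "y \<in> restrict b1 {1..m1} ` {1..m1}" using y z rimg[of "{1..m1}"] by auto
      have n2: "y \<in> restrict b1 {1..m1} ` ({1..m1} - restrict a1 {1..k1} ` {1..k1})"
      proof -
        have "a1 (k1+i) \<in> {1..m1} - restrict a1 {1..k1} ` {1..k1}" using z znot rimga by simp
        then show ?thesis using y z by (intro image_eqI[of _ _ "a1 (k1+i)"]) auto
      qed
      have inv: "the_inv_into {1..m1} (restrict b1 {1..m1}) y = a1 (k1+i)"
      proof -
        have "y = restrict b1 {1..m1} (a1 (k1+i))" using y z by simp
        then show ?thesis using the_inv_into_f_f[OF rinj z] by simp
      qed
      have ph: "phi3 k1 k2 m1 l a1 a2 (a1 (k1+i)) = a2 (k2+i)" using phi3_in[OF a1 i(1)] .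
      have a2i: "a2 (k2+i) \<in> {1..m2}" using a2in[of "k2+i"] i by auto
      have "restrict b2 {1..m2} (a2 (k2+i)) = b2 (a2 (k2+i))" using a2i by simp
      then show ?thesis unfolding l inv ph using n1 n2 by (simp only: if_P if_not_P Diff_iff simp_thms)
    next
      case c
      define j where "j = x - (k1+l)"
      have j: "j \<in> {1..l'}" "x = k1 + l + j" using c x by (auto simp: j_def)
      have y: "y = b1 (m1+j)" using j c1b x by auto
      have "phi3 k1 k2 n1 (l+l') c1 c2 (c1 (k1 + (l+j))) = c2 (k2 + (l+j))"
        using phi3_in[OF c1v, of "l+j" k2 c2] j by auto
      then have l: "phi3 k1 k2 n1 (l+l') c1 c2 y = b2 (m2+j)"
        using j x c2b[of j] by (simp add: add.assoc)
      have mj: "m1 + j \<in> {1..m1+l'}" using j by auto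
      have ynot: "y \<notin> b1 ` {1..m1}"
        using inj_on_image_mem_iff[of b1 "{1..m1+l'}" "m1+j" "{1..m1}"] b1inj mj y j by auto
      have n1: "y \<in> {1..n1} - restrict b1 {1..m1} ` {1..m1}" using True ynot rimg[of "{1..m1}"] by auto
      have "phi3 m1 m2 n1 l' b1 b2 y = b2 (m2+j)" using phi3_in[OF b1 j(1), of m2 b2] y by simp
      then show ?thesis unfolding l using n1 by (simp only: if_P)
    qed
  qed
  show ?thesis unfolding Phi_eq J_comp_eq prod.inject by (intro conjI p1 p2 ext p3)
qed

definition GmSS :: "nat\<times>nat \<Rightarrow> nat\<times>nat \<Rightarrow> SS_mor \<Rightarrow> J_mor" where
  "GmSS x y f = Phi (fst x) (snd x) (fst y) (fst f) (SOME a. a \<in> snd f)"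

lemma self_cls:
  assumes a1: "a1 \<in> bijs {1..m1+l} {1..n1}" and a2: "a2 \<in> bijs {1..m2+l} {1..n2}"
  shows "(a1,a2) \<in> SS_cls m1 m2 n1 n2 l (a1,a2)"
proof -
  have s: "restrict id {1..l} \<in> bijs {1..l} {1..l}"
    by (simp add: bijs_def bij_betw_def inj_on_def)
  have t: "tsum m m id (restrict id {1..l}) x = x" if "x \<in> {1..m+l}" for m x
    using that by (auto simp: tsum_def)
  have "\<exists>\<sigma>\<in>bijs {1..l} {1..l}.
           (\<forall>x\<in>{1..m1 + l}. a1 (tsum m1 m1 id \<sigma> x) = a1 x) \<and>
           (\<forall>x\<in>{1..m2 + l}. a2 (tsum m2 m2 id \<sigma> x) = a2 x)"
    by (rule bexI[OF _ s]) (auto simp: tsum_def)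
  then show ?thesis unfolding SS_cls_def using a1 a2 by simp
qed

lemma cls_valid: "(c1,c2) \<in> SS_cls m1 m2 n1 n2 l a \<Longrightarrow>
   c1 \<in> bijs {1..m1+l} {1..n1} \<and> c2 \<in> bijs {1..m2+l} {1..n2}"
  by (simp add: SS_cls_def)

lemma Gm_cls:
  assumes a1: "a1 \<in> bijs {1..m1+l} {1..n1}" and a2: "a2 \<in> bijs {1..m2+l} {1..n2}"
  shows "GmSS (m1,m2) (n1,n2) (l, SS_cls m1 m2 n1 n2 l (a1,a2)) = Phi m1 m2 n1 l (a1,a2)"
proof -
  let ?A = "SS_cls m1 m2 n1 n2 l (a1,a2)"
  have "(SOME a. a \<in> ?A) \<in> ?A" using self_cls[OF a1 a2] by (rule someI)
  moreover obtain c1 c2 where c: "(SOME a. a \<in> ?A) = (c1,c2)" by fastforce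
  ultimately have "(c1,c2) \<in> ?A" by simp
  then have "Phi m1 m2 n1 l (c1,c2) = Phi m1 m2 n1 l (a1,a2)" by (rule cls_imp_Phi[OF a1 a2])
  then show ?thesis unfolding GmSS_def using c by simp
qed

lemma bijs_card: "f \<in> bijs {1..p} {1..q} \<Longrightarrow> p = q"
  unfolding bijs_def using bij_betw_same_card[of f "{1..p}" "{1..q}"] by simp

lemma Phi_hom:
  assumes a1: "a1 \<in> bijs {1..m1+l} {1..n1}" and a2: "a2 \<in> bijs {1..m2+l} {1..n2}"
  shows "Phi m1 m2 n1 l (a1,a2) \<in> J_hom (m1,m2) (n1,n2)"
proof -
  note A1 = bijsD[OF a1] and A2 = bijsD[OF a2]
  have a1inj: "inj_on a1 {1..m1+l}" and a1img: "a1 ` {1..m1+l} = {1..n1}"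
    and a2inj: "inj_on a2 {1..m2+l}" and a2img: "a2 ` {1..m2+l} = {1..n2}" using A1 A2 by blast+
  have sub1: "{1..m1} \<subseteq> {1..m1+l}" and sub2: "{1..m2} \<subseteq> {1..m2+l}" by auto
  have i1: "inj_on (restrict a1 {1..m1}) {1..m1}"
    using inj_on_subset[OF a1inj sub1] by (subst inj_on_cong[of _ _ a1]) auto
  have i2: "inj_on (restrict a2 {1..m2}) {1..m2}"
    using inj_on_subset[OF a2inj sub2] by (subst inj_on_cong[of _ _ a2]) auto
  have r1: "restrict a1 {1..m1} ` {1..m1} = a1 ` {1..m1}" by (rule image_cong) auto
  have r2: "restrict a2 {1..m2} ` {1..m2} = a2 ` {1..m2}" by (rule image_cong) auto
  have im1: "a1 ` {1..m1} \<subseteq> {1..n1}" using a1img sub1 by blast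
  have im2: "a2 ` {1..m2} \<subseteq> {1..n2}" using a2img sub2 by blast
  have C1: "{1..n1} - a1 ` {1..m1} = (\<lambda>j. a1 (m1+j)) ` {1..l}"
  proof
    show "{1..n1} - a1 ` {1..m1} \<subseteq> (\<lambda>j. a1 (m1+j)) ` {1..l}"
    proof
      fix y assume y: "y \<in> {1..n1} - a1 ` {1..m1}"
      then obtain x where x: "x \<in> {1..m1+l}" "y = a1 x" using a1img by blast
      then have "x > m1" using y by auto
      then show "y \<in> (\<lambda>j. a1 (m1+j)) ` {1..l}" using x by (intro image_eqI[of _ _ "x - m1"]) auto
    qed
    show "(\<lambda>j. a1 (m1+j)) ` {1..l} \<subseteq> {1..n1} - a1 ` {1..m1}"
    proof
      fix y assume "y \<in> (\<lambda>j. a1 (m1+j)) ` {1..l}"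
      then obtain j where j: "j \<in> {1..l}" "y = a1 (m1+j)" by blast
      have "m1 + j \<in> {1..m1+l}" using j by auto
      moreover then have "y \<notin> a1 ` {1..m1}"
        using inj_on_image_mem_iff[OF a1inj _ sub1] j by auto
      ultimately show "y \<in> {1..n1} - a1 ` {1..m1}" using a1img j by blast
    qed
  qed
  have C2: "{1..n2} - a2 ` {1..m2} = (\<lambda>j. a2 (m2+j)) ` {1..l}"
  proof
    show "{1..n2} - a2 ` {1..m2} \<subseteq> (\<lambda>j. a2 (m2+j)) ` {1..l}"
    proof
      fix y assume y: "y \<in> {1..n2} - a2 ` {1..m2}"
      then obtain x where x: "x \<in> {1..m2+l}" "y = a2 x" using a2img by blast
      then have "x > m2" using y by auto
      then show "y \<in> (\<lambda>j. a2 (m2+j)) ` {1..l}" using x by (intro image_eqI[of _ _ "x - m2"]) auto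
    qed
    show "(\<lambda>j. a2 (m2+j)) ` {1..l} \<subseteq> {1..n2} - a2 ` {1..m2}"
    proof
      fix y assume "y \<in> (\<lambda>j. a2 (m2+j)) ` {1..l}"
      then obtain j where j: "j \<in> {1..l}" "y = a2 (m2+j)" by blast
      have "m2 + j \<in> {1..m2+l}" using j by auto
      moreover then have "y \<notin> a2 ` {1..m2}"
        using inj_on_image_mem_iff[OF a2inj _ sub2] j by auto
      ultimately show "y \<in> {1..n2} - a2 ` {1..m2}" using a2img j by blast
    qed
  qed
  have ext3: "phi3 m1 m2 n1 l a1 a2 \<in> extensional ({1..n1} - a1 ` {1..m1})"
    by (auto simp: extensional_def phi3_def)
  have bij3: "bij_betw (phi3 m1 m2 n1 l a1 a2) ({1..n1} - a1 ` {1..m1}) ({1..n2} - a2 ` {1..m2})"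
    unfolding C1 C2 bij_betw_def
  proof
    show "inj_on (phi3 m1 m2 n1 l a1 a2) ((\<lambda>j. a1 (m1 + j)) ` {1..l})"
    proof (rule inj_onI)
      fix y y' assume "y \<in> (\<lambda>j. a1 (m1 + j)) ` {1..l}" "y' \<in> (\<lambda>j. a1 (m1 + j)) ` {1..l}"
        and e: "phi3 m1 m2 n1 l a1 a2 y = phi3 m1 m2 n1 l a1 a2 y'"
      then obtain j j' where j: "j \<in> {1..l}" "y = a1 (m1+j)" and j': "j' \<in> {1..l}" "y' = a1 (m1+j')"
        by blast
      have "a2 (m2+j) = a2 (m2+j')" using e j j' phi3_in[OF a1] by simp
      moreover have "m2+j \<in> {1..m2+l}" "m2+j' \<in> {1..m2+l}" using j j' by auto
      ultimately have "j = j'" using a2inj by (auto dest: inj_onD)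
      then show "y = y'" using j j' by simp
    qed
    have "phi3 m1 m2 n1 l a1 a2 ` (\<lambda>j. a1 (m1 + j)) ` {1..l} = (\<lambda>j. a2 (m2 + j)) ` {1..l}"
      unfolding image_image by (rule image_cong) (auto simp: phi3_in[OF a1])
    then show "phi3 m1 m2 n1 l a1 a2 ` (\<lambda>j. a1 (m1 + j)) ` {1..l} = (\<lambda>j. a2 (m2 + j)) ` {1..l}" .
  qed
  show ?thesis unfolding Phi_eq J_hom_def
    using i1 i2 r1 r2 im1 im2 ext3 bij3 by simp
qed

lemma SS_hom_elim:
  assumes "f \<in> SS_hom (m1,m2) (n1,n2)"
  obtains l a1 a2 where "f = (l, SS_cls m1 m2 n1 n2 l (a1,a2))"
    "a1 \<in> bijs {1..m1+l} {1..n1}" "a2 \<in> bijs {1..m2+l} {1..n2}"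
  using assms unfolding SS_hom_def by auto

lemma SS_hom_intro:
  "a1 \<in> bijs {1..m1+l} {1..n1} \<Longrightarrow> a2 \<in> bijs {1..m2+l} {1..n2} \<Longrightarrow>
   (l, SS_cls m1 m2 n1 n2 l (a1,a2)) \<in> SS_hom (m1,m2) (n1,n2)"
  unfolding SS_hom_def by blast

lemma rid_bijs: "restrict id {1..n} \<in> bijs {1..n} {1..n}"
  by (simp add: bijs_def bij_betw_def inj_on_def)

lemma rid_bijs0: "restrict id {1..n} \<in> bijs {1..n+0} {1..n}" using rid_bijs by simp

lemma SS_id_hom: "SS_id (n1,n2) \<in> SS_hom (n1,n2) (n1,n2)"
  unfolding SS_id_def prod.case by (rule SS_hom_intro[OF rid_bijs0 rid_bijs0])

lemma Gm_id: "GmSS (n1,n2) (n1,n2) (SS_id (n1,n2)) = J_id (n1,n2)"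
proof -
  have "GmSS (n1,n2) (n1,n2) (SS_id (n1,n2)) = Phi n1 n2 n1 0 (restrict id {1..n1}, restrict id {1..n2})"
    unfolding SS_id_def prod.case by (rule Gm_cls[OF rid_bijs0 rid_bijs0])
  also have "\<dots> = J_id (n1,n2)"
  proof -
    have "restrict id {1..n1} ` {1..n1} = {1..n1}" by auto
    then have "phi3 n1 n2 n1 0 (restrict id {1..n1}) (restrict id {1..n2}) = restrict id {}"
      by (auto simp: phi3_def fun_eq_iff)
    then show ?thesis unfolding Phi_eq J_id_def by simp
  qed
  finally show ?thesis .
qed

lemma Gm_comp:
  assumes f: "f \<in> SS_hom (k1,k2) (m1,m2)" and g: "g \<in> SS_hom (m1,m2) (n1,n2)"
  shows "SS_comp (k1,k2) (m1,m2) (n1,n2) f g \<in> SS_hom (k1,k2) (n1,n2) \<and>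
    GmSS (k1,k2) (n1,n2) (SS_comp (k1,k2) (m1,m2) (n1,n2) f g) =
    J_comp (k1,k2) (m1,m2) (n1,n2) (GmSS (k1,k2) (m1,m2) f) (GmSS (m1,m2) (n1,n2) g)"
proof -
  obtain l a1 a2 where fe: "f = (l, SS_cls k1 k2 m1 m2 l (a1,a2))"
    and a1: "a1 \<in> bijs {1..k1+l} {1..m1}" and a2: "a2 \<in> bijs {1..k2+l} {1..m2}"
    using f by (rule SS_hom_elim)
  obtain l' b1 b2 where ge: "g = (l', SS_cls m1 m2 n1 n2 l' (b1,b2))"
    and b1: "b1 \<in> bijs {1..m1+l'} {1..n1}" and b2: "b2 \<in> bijs {1..m2+l'} {1..n2}"
    using g by (rule SS_hom_elim)
  let ?A = "SS_cls k1 k2 m1 m2 l (a1,a2)" and ?B = "SS_cls m1 m2 n1 n2 l' (b1,b2)"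
  obtain x1 x2 where x: "(SOME a. a \<in> ?A) = (x1,x2)" by fastforce
  obtain y1 y2 where y: "(SOME a. a \<in> ?B) = (y1,y2)" by fastforce
  have xA: "(x1,x2) \<in> ?A" using someI[of "\<lambda>a. a \<in> ?A", OF self_cls[OF a1 a2]] x by simp
  have yB: "(y1,y2) \<in> ?B" using someI[of "\<lambda>a. a \<in> ?B", OF self_cls[OF b1 b2]] y by simp
  note xv = cls_valid[OF xA] and yv = cls_valid[OF yB]
  define c1 where "c1 = restrict (y1 \<circ> tsum (k1+l) m1 x1 id) {1..k1+l+l'}"
  define c2 where "c2 = restrict (y2 \<circ> tsum (k2+l) m2 x2 id) {1..k2+l+l'}"
  have comp: "SS_comp (k1,k2) (m1,m2) (n1,n2) f g = (l+l', SS_cls k1 k2 n1 n2 (l+l') (c1,c2))"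
    unfolding SS_comp_def fe ge c1_def c2_def by (simp add: Let_def x y)
  have c1v: "c1 \<in> bijs {1..k1+(l+l')} {1..n1}" unfolding c1_def using xv yv by (intro comp_valid) auto
  have c2v: "c2 \<in> bijs {1..k2+(l+l')} {1..n2}" unfolding c2_def using xv yv by (intro comp_valid) auto
  have "GmSS (k1,k2) (n1,n2) (SS_comp (k1,k2) (m1,m2) (n1,n2) f g) = Phi k1 k2 n1 (l+l') (c1,c2)"
    unfolding comp using Gm_cls[OF c1v c2v] .
  also have "\<dots> = J_comp (k1,k2) (m1,m2) (n1,n2) (Phi k1 k2 m1 l (x1,x2)) (Phi m1 m2 n1 l' (y1,y2))"
    using xv yv by (intro comp_Phi[OF _ _ _ _ c1_def c2_def]) auto
  also have "\<dots> = J_comp (k1,k2) (m1,m2) (n1,n2) (GmSS (k1,k2) (m1,m2) f) (GmSS (m1,m2) (n1,n2) g)"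
    unfolding fe ge Gm_cls[OF a1 a2] Gm_cls[OF b1 b2]
    using cls_imp_Phi[OF a1 a2 xA] cls_imp_Phi[OF b1 b2 yB] by simp
  finally show ?thesis using comp SS_hom_intro[OF c1v c2v] by (simp add: add.assoc)
qed

lemma cls_eq:
  assumes a1: "a1 \<in> bijs {1..m1+l} {1..n1}" and a2: "a2 \<in> bijs {1..m2+l} {1..n2}"
    and b1: "b1 \<in> bijs {1..m1+l} {1..n1}" and b2: "b2 \<in> bijs {1..m2+l} {1..n2}"
    and e: "Phi m1 m2 n1 l (a1,a2) = Phi m1 m2 n1 l (b1,b2)"
  shows "SS_cls m1 m2 n1 n2 l (a1,a2) = SS_cls m1 m2 n1 n2 l (b1,b2)"
proof (intro set_eqI iffI)
  fix c assume c: "c \<in> SS_cls m1 m2 n1 n2 l (a1,a2)"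
  obtain c1 c2 where cc: "c = (c1,c2)" by fastforce
  show "c \<in> SS_cls m1 m2 n1 n2 l (b1,b2)" unfolding cc
    using Phi_imp_cls[OF b1 b2] cls_valid[of c1 c2] cls_imp_Phi[OF a1 a2] c e cc by metis
next
  fix c assume c: "c \<in> SS_cls m1 m2 n1 n2 l (b1,b2)"
  obtain c1 c2 where cc: "c = (c1,c2)" by fastforce
  show "c \<in> SS_cls m1 m2 n1 n2 l (a1,a2)" unfolding cc
    using Phi_imp_cls[OF a1 a2] cls_valid[of c1 c2] cls_imp_Phi[OF b1 b2] c e cc by metis
qed

lemma Gm_inj: "inj_on (GmSS (m1,m2) (n1,n2)) (SS_hom (m1,m2) (n1,n2))"
proof (rule inj_onI)
  fix f g assume f: "f \<in> SS_hom (m1,m2) (n1,n2)" and g: "g \<in> SS_hom (m1,m2) (n1,n2)"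
    and e: "GmSS (m1,m2) (n1,n2) f = GmSS (m1,m2) (n1,n2) g"
  obtain l a1 a2 where fe: "f = (l, SS_cls m1 m2 n1 n2 l (a1,a2))"
    and a1: "a1 \<in> bijs {1..m1+l} {1..n1}" and a2: "a2 \<in> bijs {1..m2+l} {1..n2}"
    using f by (rule SS_hom_elim)
  obtain l' b1 b2 where ge: "g = (l', SS_cls m1 m2 n1 n2 l' (b1,b2))"
    and b1: "b1 \<in> bijs {1..m1+l'} {1..n1}" and b2: "b2 \<in> bijs {1..m2+l'} {1..n2}"
    using g by (rule SS_hom_elim)
  have "m1 + l = n1" "m1 + l' = n1" using bijs_card[OF a1] bijs_card[OF b1] by auto
  then have ll: "l' = l" by simp
  have "Phi m1 m2 n1 l (a1,a2) = Phi m1 m2 n1 l (b1,b2)"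
    using e unfolding fe ge ll using Gm_cls[OF a1 a2] Gm_cls[of b1 m1 l n1 b2 m2 n2] b1 b2 ll by simp
  then show "f = g" unfolding fe ge ll using cls_eq[OF a1 a2] b1 b2 ll by simp
qed

lemma J_surj:
  assumes h: "(b1,b2,s) \<in> J_hom (m1,m2) (n1,n2)"
  shows "\<exists>l a1 a2. a1 \<in> bijs {1..m1+l} {1..n1} \<and> a2 \<in> bijs {1..m2+l} {1..n2} \<and>
     Phi m1 m2 n1 l (a1,a2) = (b1,b2,s)"
proof -
  from h have e1: "b1 \<in> extensional {1..m1}" and e2: "b2 \<in> extensional {1..m2}"
    and i1: "inj_on b1 {1..m1}" and i2: "inj_on b2 {1..m2}"
    and im1: "b1 ` {1..m1} \<subseteq> {1..n1}" and im2: "b2 ` {1..m2} \<subseteq> {1..n2}"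
    and es: "s \<in> extensional ({1..n1} - b1 ` {1..m1})"
    and bs: "bij_betw s ({1..n1} - b1 ` {1..m1}) ({1..n2} - b2 ` {1..m2})"
    unfolding J_hom_def by auto
  define C1 where "C1 = {1..n1} - b1 ` {1..m1}"
  define C2 where "C2 = {1..n2} - b2 ` {1..m2}"
  define l where "l = card C1"
  have cb1: "card (b1 ` {1..m1}) = m1" using card_image[OF i1] by simp
  have cb2: "card (b2 ` {1..m2}) = m2" using card_image[OF i2] by simp
  have "card (b1 ` {1..m1}) \<le> n1" using card_mono[OF _ im1] by simp
  then have mn1: "m1 \<le> n1" using cb1 by simp
  have "card (b2 ` {1..m2}) \<le> n2" using card_mono[OF _ im2] by simp
  then have mn2: "m2 \<le> n2" using cb2 by simp
  have cC1: "card C1 = n1 - m1" unfolding C1_def using card_Diff_subset[OF _ im1] cb1 by simp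
  have cC2: "card C2 = n2 - m2" unfolding C2_def using card_Diff_subset[OF _ im2] cb2 by simp
  have "card C1 = card C2" using bij_betw_same_card[OF bs] unfolding C1_def C2_def .
  then have n1l: "n1 = m1 + l" and n2l: "n2 = m2 + l" using cC1 cC2 mn1 mn2 l_def by auto
  obtain e where e: "bij_betw e {1..l} C1"
    using ex_bij_betw_nat_finite_1[of C1] unfolding l_def C1_def by auto
  have se: "bij_betw (s \<circ> e) {1..l} C2" using bij_betw_trans[OF e] bs unfolding C1_def C2_def by blast
  define a1 where "a1 = restrict (\<lambda>x. if x \<le> m1 then b1 x else e (x - m1)) {1..m1+l}"
  define a2 where "a2 = restrict (\<lambda>x. if x \<le> m2 then b2 x else (s \<circ> e) (x - m2)) {1..m2+l}"
  have u1: "b1 ` {1..m1} \<union> C1 = {1..n1}" using im1 unfolding C1_def by blast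
  have u2: "b2 ` {1..m2} \<union> C2 = {1..n2}" using im2 unfolding C2_def by blast
  have bj1: "bij_betw (\<lambda>x. if x \<le> m1 then b1 x else e (x - m1)) {1..m1+l} {1..n1}"
    using bij_concat[of b1 m1 "b1 ` {1..m1}" e l C1] i1 e u1 unfolding C1_def bij_betw_def by auto
  have bj2: "bij_betw (\<lambda>x. if x \<le> m2 then b2 x else (s \<circ> e) (x - m2)) {1..m2+l} {1..n2}"
    using bij_concat[of b2 m2 "b2 ` {1..m2}" "s \<circ> e" l C2] i2 se u2 unfolding C2_def bij_betw_def
    by auto
  have a1b: "a1 \<in> bijs {1..m1+l} {1..n1}" unfolding a1_def bijs_def
    using bj1 by (simp add: bij_betw_cong[of _ _ "restrict _ _"])
  have a2b: "a2 \<in> bijs {1..m2+l} {1..n2}" unfolding a2_def bijs_def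
    using bj2 by (simp add: bij_betw_cong[of _ _ "restrict _ _"])
  have r1: "restrict a1 {1..m1} = b1"
  proof (rule ext)
    fix x show "restrict a1 {1..m1} x = b1 x"
      using e1 by (cases "x \<in> {1..m1}") (auto simp: a1_def extensional_def)
  qed
  have r2: "restrict a2 {1..m2} = b2"
  proof (rule ext)
    fix x show "restrict a2 {1..m2} x = b2 x"
      using e2 by (cases "x \<in> {1..m2}") (auto simp: a2_def extensional_def)
  qed
  have a1img: "a1 ` {1..m1} = b1 ` {1..m1}" by (rule image_cong) (auto simp: a1_def)
  have p3: "phi3 m1 m2 n1 l a1 a2 y = s y" for y
  proof (cases "y \<in> C1")
    case True
    then obtain j where j: "j \<in> {1..l}" "y = e j" using e unfolding bij_betw_def by blast
    have "a1 (m1+j) = y" using j by (simp add: a1_def)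
    moreover have "a2 (m2+j) = s y" using j by (simp add: a2_def)
    ultimately show ?thesis using phi3_in[OF a1b j(1), of m2 a2] by simp
  next
    case False
    then have "y \<notin> {1..n1} - a1 ` {1..m1}" using a1img unfolding C1_def by simp
    then have "phi3 m1 m2 n1 l a1 a2 y = undefined" by (rule phi3_out)
    moreover have "s y = undefined" using es False unfolding C1_def extensional_def by blast
    ultimately show ?thesis by simp
  qed
  have "Phi m1 m2 n1 l (a1,a2) = (b1,b2,s)" unfolding Phi_eq r1 r2 using p3 by (simp add: fun_eq_iff)
  then show ?thesis using a1b a2b n1l n2l by blast
qed

lemma Gm_hom: "f \<in> SS_hom x y \<Longrightarrow> GmSS x y f \<in> J_hom x y"
proof -
  assume f: "f \<in> SS_hom x y"
  obtain m1 m2 n1 n2 where xy: "x = (m1,m2)" "y = (n1,n2)" by fastforce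
  obtain l a1 a2 where fe: "f = (l, SS_cls m1 m2 n1 n2 l (a1,a2))"
    and a1: "a1 \<in> bijs {1..m1+l} {1..n1}" and a2: "a2 \<in> bijs {1..m2+l} {1..n2}"
    using f unfolding xy by (rule SS_hom_elim)
  show ?thesis unfolding xy fe Gm_cls[OF a1 a2] by (rule Phi_hom[OF a1 a2])
qed

lemma Gm_bij: "bij_betw (GmSS x y) (SS_hom x y) (J_hom x y)"
proof -
  obtain m1 m2 n1 n2 where xy: "x = (m1,m2)" "y = (n1,n2)" by fastforce
  have "J_hom x y \<subseteq> GmSS x y ` SS_hom x y"
  proof
    fix h assume h: "h \<in> J_hom x y"
    obtain b1 b2 s where hh: "h = (b1,b2,s)" by (cases h) auto
    obtain l a1 a2 where a1: "a1 \<in> bijs {1..m1+l} {1..n1}" and a2: "a2 \<in> bijs {1..m2+l} {1..n2}"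
      and p: "Phi m1 m2 n1 l (a1,a2) = (b1,b2,s)"
      using J_surj[of b1 b2 s m1 m2 n1 n2] h unfolding hh xy by blast
    show "h \<in> GmSS x y ` SS_hom x y" unfolding xy hh
      using Gm_cls[OF a1 a2] p SS_hom_intro[OF a1 a2] by (metis image_eqI)
  qed
  then show ?thesis unfolding bij_betw_def using Gm_inj[of m1 m2 n1 n2] Gm_hom xy by blast
qed

theorem proposition4p3:
  shows "cat_isomorphic J_cat SS_cat"
proof (rule iso_from_bij_functor[where Gm = GmSS])
  show "is_functor SS_cat J_cat (\<lambda>x. x) GmSS"
    unfolding is_functor_def SS_cat_def J_cat_def cat.simps
  proof (intro conjI ballI)
    fix x :: "nat \<times> nat" show "x \<in> UNIV" by simp
  next
    fix x y f assume "f \<in> SS_hom x y" then show "GmSS x y f \<in> J_hom x y" by (rule Gm_hom)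
  next
    fix x show "GmSS x x (SS_id x) = J_id x" using Gm_id[of "fst x" "snd x"] by simp
  next
    fix x y z f g assume "f \<in> SS_hom x y" "g \<in> SS_hom y z"
    then show "GmSS x z (SS_comp x y z f g) = J_comp x y z (GmSS x y f) (GmSS y z g)"
      using Gm_comp[of f "fst x" "snd x" "fst y" "snd y" g "fst z" "snd z"] by simp
  qed
  show "Ob J_cat = Ob SS_cat" by (simp add: J_cat_def SS_cat_def)
  show "bij_betw (GmSS x y) (Hom SS_cat x y) (Hom J_cat x y)" for x y
    using Gm_bij by (simp add: J_cat_def SS_cat_def)
  show "Comp SS_cat x y z f g \<in> Hom SS_cat x z" if "f \<in> Hom SS_cat x y" "g \<in> Hom SS_cat y z" for x y z f g
    using that Gm_comp[of f "fst x" "snd x" "fst y" "snd y" g "fst z" "snd z"] by (simp add: SS_cat_def)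
  show "Id SS_cat x \<in> Hom SS_cat x x" for x
    using SS_id_hom[of "fst x" "snd x"] by (simp add: SS_cat_def)
qed

end
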